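(* Fix $1\le p<2$ and constants $C_0,C_1>0$. There are constants $\omega_0$ and $c>0$ such that for all integers $d\ge2$, $n\ge d^2$, every $\omega\ge\omega_0$ and every fixed $y\in\mathbb{R}^n$: (i) if $\Pi$ is an $R\times n$ CountSketch matrix with $R=\lceil C_0d^2\rceil$, then with probability at least $1-\exp(-c\,\omega d\log d)$, $\|\Pi(y_{1:d^2})\|_p\le(\omega d\log d)^{1-1/p}\|y\|_p$; (ii) if $2<B\le d$ and $\Pi$ is an $R\times n$ OSNAP matrix with $R=\lceil C_0Bd\log d\rceil$ rows and $s=\lceil C_1\log_B d\rceil\le R$ non-zeros per column, then with probability at least $1-\exp(-c\,\omega d\log d)$, $\|\Pi(y_{1:d^2})\|_p\le s^{1/p-1/2}(\omega d\log d)^{1-1/p}\|y\|_p$.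
   Context: For $u\in\mathbb{R}^n$ and $1\le a\le b\le n$, $u_{a:b}$ denotes the vector whose $i$-th coordinate equals $u_i$ if $i\in[a,b]$ and $0$ otherwise. An $R\times n$ CountSketch matrix: independently for each column $j$, a uniformly random row $h(j)\in[R]$ is chosen and $\Pi_{h(j),j}$ is a uniformly random sign in $\{-1,1\}$; all other entries are $0$. An $R\times n$ OSNAP matrix with $s$ non-zeros per column: independently for each column, $s$ distinct rows are chosen uniformly at random and those entries are independently set to $\pm s^{-1/2}$ with uniformly random sign; all other entries are $0$. $\|y\|_p=(\sum_i|y_i|^p)^{1/p}$. *)

theory Defs
  imports "HOL-Probability.Probability"
begin

text \<open>Conventions: rows are indexed by 0..<R, columns by 0..<n (0-based).
  A matrix is represented column-wise: M j i is the entry in row i, column j.\<close>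

definition mat_apply :: "nat \<Rightarrow> nat \<Rightarrow> (nat \<Rightarrow> nat \<Rightarrow> real) \<Rightarrow> (nat \<Rightarrow> real) \<Rightarrow> (nat \<Rightarrow> real)" where
  "mat_apply R n M u = (\<lambda>i. if i < R then (\<Sum>j<n. M j i * u j) else 0)"

definition lp_norm :: "real \<Rightarrow> nat \<Rightarrow> (nat \<Rightarrow> real) \<Rightarrow> real" where
  "lp_norm p m u = (\<Sum>i<m. \<bar>u i\<bar> powr p) powr (1 / p)"

text \<open>u_{a:b} with 1-based a=1, b=k: keep the first k coordinates (0-based indices < k).\<close>
definition restrict_first :: "nat \<Rightarrow> (nat \<Rightarrow> real) \<Rightarrow> (nat \<Rightarrow> real)" where
  "restrict_first k u = (\<lambda>i. if i < k then u i else 0)"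

definition countsketch_col :: "nat \<Rightarrow> (nat \<Rightarrow> real) pmf" where
  "countsketch_col R =
     do { h \<leftarrow> pmf_of_set {..<R};
          \<sigma> \<leftarrow> pmf_of_set {-1, 1::real};
          return_pmf (\<lambda>i. if i = h then \<sigma> else 0) }"

definition countsketch :: "nat \<Rightarrow> nat \<Rightarrow> (nat \<Rightarrow> nat \<Rightarrow> real) pmf" where
  "countsketch R n = Pi_pmf {..<n} (\<lambda>_. 0) (\<lambda>_. countsketch_col R)"

definition osnap_col :: "nat \<Rightarrow> nat \<Rightarrow> (nat \<Rightarrow> real) pmf" where
  "osnap_col R s =
     do { S \<leftarrow> pmf_of_set {S. S \<subseteq> {..<R} \<and> card S = s};
          \<sigma> \<leftarrow> Pi_pmf S 0 (\<lambda>_. pmf_of_set {-1, 1::real});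
          return_pmf (\<lambda>i. if i \<in> S then \<sigma> i / sqrt (real s) else 0) }"

definition osnap :: "nat \<Rightarrow> nat \<Rightarrow> nat \<Rightarrow> (nat \<Rightarrow> nat \<Rightarrow> real) pmf" where
  "osnap R s n = Pi_pmf {..<n} (\<lambda>_. 0) (\<lambda>_. osnap_col R s)"

end

theory Submission
  imports Defs
begin

lemma bind_event_le:
  fixes M :: "'a pmf" and N :: "'a \<Rightarrow> 'b pmf"
  assumes "\<And>h. h \<in> set_pmf M \<Longrightarrow> h \<notin> G \<Longrightarrow> set_pmf (N h) \<inter> X = {}"
  shows "measure_pmf.prob (bind_pmf M N) X \<le> measure_pmf.prob M G"
proof -
  have "emeasure (measure_pmf (bind_pmf M N)) X = (\<integral>\<^sup>+h. emeasure (N h) X \<partial>M)"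
    by simp
  also have "\<dots> \<le> (\<integral>\<^sup>+h. indicator G h \<partial>M)"
  proof (rule nn_integral_mono_AE, rule AE_pmfI)
    fix h assume h: "h \<in> set_pmf M"
    show "emeasure (N h) X \<le> indicator G h"
    proof (cases "h \<in> G")
      case True
      then show ?thesis by (simp add: measure_pmf.emeasure_le_1)
    next
      case False
      then have "measure (measure_pmf (N h)) X = 0" using assms h measure_pmf_zero_iff by blast
      then show ?thesis using False by (simp add: measure_pmf.emeasure_eq_measure)
    qed
  qed
  also have "\<dots> = emeasure (measure_pmf M) G" by simp
  finally show ?thesis by (simp add: measure_pmf.emeasure_eq_measure)
qed

lemma exp_ge_pow_fact:
  fixes x :: real assumes "0 \<le> x"
  shows "x ^ k / fact k \<le> exp x"
proof -
  have s: "summable (\<lambda>n. x ^ n /\<^sub>R fact n)" using exp_converges sums_summable by blast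
  have "(\<Sum>n\<in>{k}. x ^ n /\<^sub>R fact n) \<le> (\<Sum>n. x ^ n /\<^sub>R fact n)"
    by (rule sum_le_suminf[OF s]) (use assms in auto)
  then show ?thesis by (simp add: exp_def divide_inverse mult.commute)
qed

lemma binom_bound:
  fixes q :: real
  assumes "0 \<le> q" "K \<ge> 1"
  shows "real (m choose K) * q ^ K \<le> (exp 1 * real m * q / real K) ^ K"
proof -
  have f: "real (m choose K) * fact K \<le> real m ^ K"
    using binomial_fact_pow[of m K] by (metis of_nat_fact of_nat_le_iff of_nat_mult of_nat_power)
  have fp: "(0::real) < fact K" by simp
  have e: "real K ^ K / fact K \<le> exp (real K)" by (rule exp_ge_pow_fact) simp
  have e2: "real K ^ K \<le> exp 1 ^ K * fact K"
    using e fp by (simp add: field_simps exp_of_nat_mult[symmetric] exp_of_nat2_mult)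
  have "real (m choose K) * q ^ K * real K ^ K \<le> real (m choose K) * q ^ K * (exp 1 ^ K * fact K)"
    using e2 assms by (intro mult_left_mono) auto
  also have "\<dots> = (real (m choose K) * fact K) * (q ^ K * exp 1 ^ K)" by (simp add: algebra_simps)
  also have "\<dots> \<le> real m ^ K * (q ^ K * exp 1 ^ K)"
    using f assms by (intro mult_right_mono) auto
  finally have "real (m choose K) * q ^ K * real K ^ K \<le> (exp 1 * real m * q) ^ K"
    by (simp add: power_mult_distrib algebra_simps)
  moreover have "real K ^ K > 0" using assms by simp
  ultimately show ?thesis by (simp add: power_divide field_simps)
qed

lemma power_mean_card:
  fixes a :: "'a \<Rightarrow> real"
  assumes fin: "finite S" and nn: "\<And>j. j \<in> S \<Longrightarrow> 0 \<le> a j" and p: "1 \<le> p"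
  shows "(\<Sum>j\<in>S. a j) powr p \<le> real (card S) powr (p - 1) * (\<Sum>j\<in>S. a j powr p)"
proof -
  define S' where "S' = {j\<in>S. a j > 0}"
  have S'S: "S' \<subseteq> S" by (auto simp: S'_def)
  have fin': "finite S'" using fin S'S finite_subset by blast
  have sum1: "(\<Sum>j\<in>S. a j) = (\<Sum>j\<in>S'. a j)"
  proof (rule sum.mono_neutral_right)
    show "\<forall>i\<in>S - S'. a i = 0" using nn by (force simp: S'_def)
  qed (use fin S'S in auto)
  have sum2: "(\<Sum>j\<in>S. a j powr p) = (\<Sum>j\<in>S'. a j powr p)"
  proof (rule sum.mono_neutral_right)
    show "\<forall>i\<in>S - S'. a i powr p = 0" using nn by (force simp: S'_def)
  qed (use fin S'S in auto)
  have rhs_nn: "0 \<le> real (card S) powr (p - 1) * (\<Sum>j\<in>S. a j powr p)"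
    by (intro mult_nonneg_nonneg sum_nonneg) auto
  show ?thesis
  proof (cases "S' = {}")
    case True
    then show ?thesis using sum1 rhs_nn by simp
  next
    case False
    define k where "k = real (card S')"
    have kpos: "k > 0" using False fin' by (simp add: k_def card_gt_0_iff)
    have "((\<Sum>j\<in>S'. (1/k) *\<^sub>R a j)) powr p \<le> (\<Sum>j\<in>S'. (1/k) * (a j powr p))"
      by (rule convex_on_sum[OF fin' False powr_convex[OF p]])
         (use kpos in \<open>auto simp: S'_def k_def\<close>)
    then have "((\<Sum>j\<in>S'. a j) / k) powr p \<le> (\<Sum>j\<in>S'. a j powr p) / k"
      by (simp add: sum_divide_distrib[symmetric] sum_distrib_left[symmetric] divide_inverse mult.commute)
    moreover have "((\<Sum>j\<in>S'. a j) / k) powr p = (\<Sum>j\<in>S'. a j) powr p / k powr p"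
      using kpos by (auto intro!: powr_divide sum_nonneg simp: S'_def)
    ultimately have "(\<Sum>j\<in>S'. a j) powr p \<le> k powr p * ((\<Sum>j\<in>S'. a j powr p) / k)"
      using kpos by (simp add: divide_le_eq mult.commute)
    also have "k powr p * ((\<Sum>j\<in>S'. a j powr p) / k) = k powr (p - 1) * (\<Sum>j\<in>S'. a j powr p)"
      using kpos by (simp add: powr_diff field_simps)
    also have "\<dots> \<le> real (card S) powr (p - 1) * (\<Sum>j\<in>S'. a j powr p)"
      using kpos p card_mono[OF fin S'S]
      by (intro mult_right_mono powr_mono2 sum_nonneg) (auto simp: k_def)
    finally show ?thesis using sum1 sum2 by simp
  qed
qed


lemma det_bound:
  fixes M :: "nat \<Rightarrow> nat \<Rightarrow> real" and x :: "nat \<Rightarrow> real"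
  assumes p: "1 \<le> p" and b: "0 \<le> b" and L: "0 \<le> L"
    and col: "\<And>j. j < n \<Longrightarrow> (\<Sum>r<R. \<bar>M j r\<bar> powr p) \<le> b"
    and load: "\<And>r. r < R \<Longrightarrow> real (card {j\<in>{..<n}. M j r * x j \<noteq> 0}) \<le> L"
  shows "lp_norm p R (mat_apply R n M x) \<le> L powr (1 - 1/p) * b powr (1/p) * lp_norm p n x"
proof -
  define S where "S r = {j\<in>{..<n}. M j r * x j \<noteq> 0}" for r
  have row: "\<bar>mat_apply R n M x r\<bar> powr p \<le> L powr (p-1) * (\<Sum>j<n. \<bar>M j r\<bar> powr p * \<bar>x j\<bar> powr p)"
    if r: "r < R" for r
  proof -
    have finS: "finite (S r)" by (simp add: S_def)
    have SS: "S r \<subseteq> {..<n}" by (auto simp: S_def)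
    have "mat_apply R n M x r = (\<Sum>j<n. M j r * x j)" using r by (simp add: mat_apply_def)
    also have "\<dots> = (\<Sum>j\<in>S r. M j r * x j)"
      by (rule sum.mono_neutral_right) (auto simp: S_def)
    finally have eq: "mat_apply R n M x r = (\<Sum>j\<in>S r. M j r * x j)" .
    have "\<bar>mat_apply R n M x r\<bar> powr p \<le> (\<Sum>j\<in>S r. \<bar>M j r * x j\<bar>) powr p"
      unfolding eq using p by (intro powr_mono2 sum_abs) auto
    also have "\<dots> \<le> real (card (S r)) powr (p - 1) * (\<Sum>j\<in>S r. \<bar>M j r * x j\<bar> powr p)"
      by (rule power_mean_card[OF finS _ p]) auto
    also have "\<dots> \<le> L powr (p-1) * (\<Sum>j<n. \<bar>M j r\<bar> powr p * \<bar>x j\<bar> powr p)"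
    proof (rule mult_mono)
      show "real (card (S r)) powr (p - 1) \<le> L powr (p - 1)"
        using load[OF r] p by (intro powr_mono2) (auto simp: S_def)
      show "(\<Sum>j\<in>S r. \<bar>M j r * x j\<bar> powr p) \<le> (\<Sum>j<n. \<bar>M j r\<bar> powr p * \<bar>x j\<bar> powr p)"
      proof -
        have "(\<Sum>j\<in>S r. \<bar>M j r * x j\<bar> powr p) = (\<Sum>j\<in>S r. \<bar>M j r\<bar> powr p * \<bar>x j\<bar> powr p)"
          by (simp add: abs_mult powr_mult)
        also have "\<dots> \<le> (\<Sum>j<n. \<bar>M j r\<bar> powr p * \<bar>x j\<bar> powr p)"
          by (rule sum_mono2[OF _ SS]) auto
        finally show ?thesis .
      qed
    qed (auto intro: sum_nonneg)
    finally show ?thesis .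
  qed
  have "(\<Sum>r<R. \<bar>mat_apply R n M x r\<bar> powr p) \<le> (\<Sum>r<R. L powr (p-1) * (\<Sum>j<n. \<bar>M j r\<bar> powr p * \<bar>x j\<bar> powr p))"
    by (rule sum_mono) (use row in auto)
  also have "\<dots> = L powr (p-1) * (\<Sum>r<R. \<Sum>j<n. \<bar>M j r\<bar> powr p * \<bar>x j\<bar> powr p)"
    by (rule sum_distrib_left[symmetric])
  also have "(\<Sum>r<R. \<Sum>j<n. \<bar>M j r\<bar> powr p * \<bar>x j\<bar> powr p) = (\<Sum>j<n. \<Sum>r<R. \<bar>M j r\<bar> powr p * \<bar>x j\<bar> powr p)"
    by (rule sum.swap)
  also have "\<dots> = (\<Sum>j<n. \<bar>x j\<bar> powr p * (\<Sum>r<R. \<bar>M j r\<bar> powr p))"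
    by (intro sum.cong refl) (simp add: sum_distrib_left mult.commute)
  also have "L powr (p-1) * \<dots> \<le> L powr (p-1) * (\<Sum>j<n. \<bar>x j\<bar> powr p * b)"
    by (intro mult_left_mono sum_mono) (auto simp: col)
  also have "(\<Sum>j<n. \<bar>x j\<bar> powr p * b) = (\<Sum>j<n. \<bar>x j\<bar> powr p) * b"
    by (rule sum_distrib_right[symmetric])
  finally have main: "(\<Sum>r<R. \<bar>mat_apply R n M x r\<bar> powr p) \<le> L powr (p-1) * b * (\<Sum>j<n. \<bar>x j\<bar> powr p)"
    by (simp add: algebra_simps)
  have "lp_norm p R (mat_apply R n M x) \<le> (L powr (p-1) * b * (\<Sum>j<n. \<bar>x j\<bar> powr p)) powr (1/p)"
    unfolding lp_norm_def using p main by (intro powr_mono2) (auto intro: sum_nonneg)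
  also have "\<dots> = (L powr (p-1)) powr (1/p) * b powr (1/p) * (\<Sum>j<n. \<bar>x j\<bar> powr p) powr (1/p)"
    using L b by (simp add: powr_mult sum_nonneg)
  also have "(L powr (p-1)) powr (1/p) = L powr (1 - 1/p)"
    using p by (simp add: powr_powr diff_divide_distrib)
  finally show ?thesis by (simp add: lp_norm_def)
qed

lemma prob_all_hit:
  fixes Q :: "(nat \<Rightarrow> real) pmf" and n :: nat
  assumes T: "T \<subseteq> {..<n}" and q: "0 \<le> q" and hq: "measure_pmf.prob Q {c. c r \<noteq> 0} \<le> q"
  shows "measure_pmf.prob (Pi_pmf {..<n} (\<lambda>_. 0) (\<lambda>_. Q)) {M. \<forall>j\<in>T. M j r \<noteq> 0} \<le> q ^ card T"
proof -
  define B where "B j = (if j \<in> T then {c::nat\<Rightarrow>real. c r \<noteq> 0} else UNIV)" for j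
  have "{M. \<forall>j\<in>T. M j r \<noteq> 0} = Pi {..<n} B" using T by (auto simp: B_def Pi_def)
  then have "measure_pmf.prob (Pi_pmf {..<n} (\<lambda>_. 0) (\<lambda>_. Q)) {M. \<forall>j\<in>T. M j r \<noteq> 0}
      = measure_pmf.prob (Pi_pmf {..<n} (\<lambda>_. 0) (\<lambda>_. Q)) (Pi {..<n} B)" by simp
  also have "\<dots> = (\<Prod>j\<in>{..<n}. measure_pmf.prob Q (B j))"
    by (rule measure_Pi_pmf_Pi) simp
  also have "\<dots> = (\<Prod>j\<in>T. measure_pmf.prob Q {c. c r \<noteq> 0})"
  proof -
    have "(\<Prod>j\<in>{..<n}. measure_pmf.prob Q (B j)) = (\<Prod>j\<in>T. measure_pmf.prob Q (B j))"
      by (rule prod.mono_neutral_right) (use T in \<open>auto simp: B_def\<close>)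
    also have "\<dots> = (\<Prod>j\<in>T. measure_pmf.prob Q {c. c r \<noteq> 0})"
      by (rule prod.cong) (auto simp: B_def)
    finally show ?thesis .
  qed
  also have "\<dots> \<le> (\<Prod>j\<in>T. q)"
    by (intro prod_mono) (auto simp: hq)
  finally show ?thesis by simp
qed

lemma load_bound:
  fixes Q :: "(nat \<Rightarrow> real) pmf" and n :: nat
  assumes mn: "m \<le> n" and q: "0 \<le> q" and hq: "\<And>r. r < R \<Longrightarrow> measure_pmf.prob Q {c. c r \<noteq> 0} \<le> q"
  shows "measure_pmf.prob (Pi_pmf {..<n} (\<lambda>_. 0) (\<lambda>_. Q))
           {M. \<exists>r<R. K \<le> card {j\<in>{..<m}. M j r \<noteq> 0}} \<le> real R * (real (m choose K) * q ^ K)"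
proof -
  define P where "P = Pi_pmf {..<n} (\<lambda>_. 0::real) (\<lambda>_. Q)"
  define Ts where "Ts = {T. T \<subseteq> {..<m} \<and> card T = K}"
  define E where "E r T = {M::nat\<Rightarrow>nat\<Rightarrow>real. \<forall>j\<in>T. M j r \<noteq> 0}" for r T
  have finTs: "finite Ts" unfolding Ts_def by (rule finite_subset[of _ "Pow {..<m}"]) auto
  have cardTs: "card Ts = m choose K" unfolding Ts_def using n_subsets[of "{..<m}" K] by simp
  have sub: "{M. \<exists>r<R. K \<le> card {j\<in>{..<m}. M j r \<noteq> 0}} \<subseteq> (\<Union>r\<in>{..<R}. \<Union>T\<in>Ts. E r T)"
  proof
    fix M :: "nat \<Rightarrow> nat \<Rightarrow> real" assume "M \<in> {M. \<exists>r<R. K \<le> card {j\<in>{..<m}. M j r \<noteq> 0}}"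
    then obtain r where r: "r < R" and K: "K \<le> card {j\<in>{..<m}. M j r \<noteq> 0}" by auto
    obtain T where "T \<subseteq> {j\<in>{..<m}. M j r \<noteq> 0}" "card T = K"
      using obtain_subset_with_card_n[OF K] by metis
    then show "M \<in> (\<Union>r\<in>{..<R}. \<Union>T\<in>Ts. E r T)" using r by (auto simp: Ts_def E_def)
  qed
  have "measure_pmf.prob P {M. \<exists>r<R. K \<le> card {j\<in>{..<m}. M j r \<noteq> 0}}
        \<le> measure_pmf.prob P (\<Union>r\<in>{..<R}. \<Union>T\<in>Ts. E r T)"
    by (rule measure_pmf.finite_measure_mono[OF sub]) simp
  also have "\<dots> \<le> (\<Sum>r<R. measure_pmf.prob P (\<Union>T\<in>Ts. E r T))"
    by (rule measure_pmf.finite_measure_subadditive_finite) auto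
  also have "\<dots> \<le> (\<Sum>r<R. \<Sum>T\<in>Ts. measure_pmf.prob P (E r T))"
    by (intro sum_mono measure_pmf.finite_measure_subadditive_finite finTs) auto
  also have "\<dots> \<le> (\<Sum>r<R. \<Sum>T\<in>Ts. q ^ K)"
  proof (intro sum_mono)
    fix r T assume r: "r \<in> {..<R}" and T: "T \<in> Ts"
    have "measure_pmf.prob P (E r T) \<le> q ^ card T"
      unfolding P_def E_def using T mn hq r q by (intro prob_all_hit) (auto simp: Ts_def)
    then show "measure_pmf.prob P (E r T) \<le> q ^ K" using T by (simp add: Ts_def)
  qed
  also have "\<dots> = real R * (real (m choose K) * q ^ K)" by (simp add: cardTs)
  finally show ?thesis by (simp add: P_def)
qed

lemma cs_col_prob:
  assumes r: "r < R"
  shows "measure_pmf.prob (countsketch_col R) {c. c r \<noteq> 0} \<le> 1 / real R"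
proof -
  have R: "R > 0" using r by simp
  have "measure_pmf.prob (countsketch_col R) {c. c r \<noteq> 0} \<le> measure_pmf.prob (pmf_of_set {..<R}) {r}"
    unfolding countsketch_col_def
    by (rule bind_event_le) (use R in auto)
  also have "\<dots> = 1 / real R"
  proof -
    have "{..<R} \<inter> {r} = {r}" using r by auto
    then show ?thesis by (subst measure_pmf_of_set) (use r in auto)
  qed
  finally show ?thesis .
qed

lemma cs_col_set:
  assumes R: "R > 0" and c: "c \<in> set_pmf (countsketch_col R)"
  shows "(\<Sum>r<R. \<bar>c r\<bar> powr p) \<le> 1"
proof -
  have "\<exists>h\<in>{..<R}. \<exists>\<sigma>\<in>{-1, 1::real}. c = (\<lambda>i. if i = h then \<sigma> else 0)"
  proof -
    have sp: "set_pmf (pmf_of_set {..<R}) = {..<R}" using R by (intro set_pmf_of_set) auto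
    show ?thesis using c sp by (auto simp: countsketch_col_def)
  qed
  then obtain h \<sigma> where h: "h < R" and \<sigma>: "\<sigma> \<in> {-1, 1::real}" and ceq: "c = (\<lambda>i. if i = h then \<sigma> else 0)"
    by blast
  have "(\<Sum>r<R. \<bar>c r\<bar> powr p) = (\<Sum>r<R. if r = h then \<bar>\<sigma>\<bar> powr p else 0)"
    by (rule sum.cong) (auto simp: ceq)
  also have "\<dots> = \<bar>\<sigma>\<bar> powr p" using h by simp
  also have "\<dots> = 1" using \<sigma> by auto
  finally show ?thesis by simp
qed

lemma card_subsets_containing:
  assumes r: "r < R" and s: "1 \<le> s"
  shows "card ({S. S \<subseteq> {..<R} \<and> card S = s} \<inter> {S. r \<in> S}) = (R - 1) choose (s - 1)"
proof -
  define A where "A = {S. S \<subseteq> {..<R} \<and> card S = s} \<inter> {S. r \<in> S}"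
  define B where "B = {T. T \<subseteq> {..<R} - {r} \<and> card T = s - 1}"
  have "bij_betw (\<lambda>S. S - {r}) A B"
  proof (rule bij_betw_byWitness[where f' = "insert r"])
    show "\<forall>a\<in>A. insert r (a - {r}) = a" by (auto simp: A_def)
    show "\<forall>b\<in>B. insert r b - {r} = b" by (auto simp: B_def)
    show "(\<lambda>S. S - {r}) ` A \<subseteq> B"
    proof
      fix T assume "T \<in> (\<lambda>S. S - {r}) ` A"
      then obtain S where S: "S \<in> A" "T = S - {r}" by auto
      have "finite S" using S(1) finite_subset[of S "{..<R}"] by (auto simp: A_def)
      then show "T \<in> B" using S by (auto simp: A_def B_def)
    qed
    show "insert r ` B \<subseteq> A"
    proof
      fix S assume "S \<in> insert r ` B"
      then obtain T where T: "T \<in> B" "S = insert r T" by auto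
      have "finite T" using T(1) finite_subset[of T "{..<R}"] by (auto simp: B_def)
      then show "S \<in> A" using T r s by (auto simp: A_def B_def card_insert_if)
    qed
  qed
  then have "card A = card B" by (rule bij_betw_same_card)
  also have "card B = card ({..<R} - {r}) choose (s - 1)" unfolding B_def by (rule n_subsets) simp
  also have "card ({..<R} - {r}) = R - 1" using r by simp
  finally show ?thesis by (simp add: A_def)
qed

lemma osnap_col_prob:
  assumes r: "r < R" and s: "1 \<le> s" "s \<le> R"
  shows "measure_pmf.prob (osnap_col R s) {c. c r \<noteq> 0} \<le> real s / real R"
proof -
  define Ss where "Ss = {S. S \<subseteq> {..<R} \<and> card S = s}"
  have finSs: "finite Ss" unfolding Ss_def by (rule finite_subset[of _ "Pow {..<R}"]) auto
  have cardSs: "card Ss = R choose s" unfolding Ss_def using n_subsets[of "{..<R}" s] by simp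
  have pos: "R choose s > 0" using s by simp
  have neSs: "Ss \<noteq> {}" using cardSs pos by auto
  have "measure_pmf.prob (osnap_col R s) {c. c r \<noteq> 0} \<le> measure_pmf.prob (pmf_of_set Ss) {S. r \<in> S}"
    unfolding osnap_col_def Ss_def[symmetric]
    by (rule bind_event_le) auto
  also have "\<dots> = real ((R - 1) choose (s - 1)) / real (R choose s)"
    using finSs neSs card_subsets_containing[OF r s(1)] cardSs
    by (simp add: measure_pmf_of_set Ss_def)
  also have "\<dots> = real s / real R"
  proof -
    define R' where "R' = R - 1"
    define s' where "s' = s - 1"
    have RR: "R = Suc R'" using r by (simp add: R'_def)
    have ss: "s = Suc s'" using s by (simp add: s'_def)
    have nat: "s * (R choose s) = R * ((R - 1) choose (s - 1))"
      using Suc_times_binomial[of s' R'] by (simp add: RR ss)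
    have re: "real s * real (R choose s) = real R * real ((R - 1) choose (s - 1))"
      using nat by (metis of_nat_mult)
    have "real (R choose s) \<noteq> 0" "real R \<noteq> 0" using pos r by auto
    then show ?thesis using re by (simp add: frac_eq_eq mult.commute)
  qed
  finally show ?thesis .
qed

lemma osnap_col_set:
  assumes s: "1 \<le> s" and c: "c \<in> set_pmf (osnap_col R s)" and Rs: "s \<le> R"
  shows "(\<Sum>r<R. \<bar>c r\<bar> powr p) \<le> real s powr (1 - p/2)"
proof -
  define Ss where "Ss = {S. S \<subseteq> {..<R} \<and> card S = s}"
  have finSs: "finite Ss" unfolding Ss_def by (rule finite_subset[of _ "Pow {..<R}"]) auto
  have cardSs: "card Ss = R choose s" unfolding Ss_def using n_subsets[of "{..<R}" s] by simp
  have neSs: "Ss \<noteq> {}" using cardSs Rs by auto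
  obtain S \<sigma> where S: "S \<in> Ss" and \<sigma>: "\<sigma> \<in> set_pmf (Pi_pmf S 0 (\<lambda>_. pmf_of_set {-1, 1::real}))"
      and ceq: "c = (\<lambda>i. if i \<in> S then \<sigma> i / sqrt (real s) else 0)"
    using c finSs neSs unfolding osnap_col_def Ss_def[symmetric] by auto
  have SR: "S \<subseteq> {..<R}" and cS: "card S = s" using S by (auto simp: Ss_def)
  have finS: "finite S" using SR finite_subset by blast
  have \<sigma>S: "\<sigma> i \<in> {-1, 1}" if "i \<in> S" for i
    using \<sigma> that finS by (auto simp: set_Pi_pmf PiE_dflt_def)
  have spos: "real s > 0" using s by simp
  have "(\<Sum>r<R. \<bar>c r\<bar> powr p) = (\<Sum>r\<in>S. (1 / sqrt (real s)) powr p)"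
  proof -
    have "(\<Sum>r<R. \<bar>c r\<bar> powr p) = (\<Sum>r\<in>S. \<bar>c r\<bar> powr p)"
      by (rule sum.mono_neutral_right) (use SR in \<open>auto simp: ceq\<close>)
    also have "\<dots> = (\<Sum>r\<in>S. (1 / sqrt (real s)) powr p)"
    proof (rule sum.cong)
      fix r assume r: "r \<in> S"
      have "\<bar>\<sigma> r\<bar> = 1" using \<sigma>S[OF r] by auto
      then show "\<bar>c r\<bar> powr p = (1 / sqrt (real s)) powr p" using r by (simp add: ceq)
    qed simp
    finally show ?thesis .
  qed
  also have "\<dots> = real s * (1 / sqrt (real s)) powr p" using cS by simp
  also have "(1 / sqrt (real s)) powr p = real s powr (- p/2)"
  proof -
    have "1 / sqrt (real s) = real s powr (-(1/2))"
      using spos by (simp add: powr_minus_divide powr_half_sqrt)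
    then have "(1 / sqrt (real s)) powr p = real s powr (-(1/2) * p)" by (simp add: powr_powr)
    then show ?thesis by simp
  qed
  also have "real s * real s powr (- p/2) = real s powr (1 - p/2)"
  proof -
    have "real s * real s powr (- p/2) = real s powr 1 * real s powr (- p/2)" using spos by simp
    also have "\<dots> = real s powr (1 + - p/2)" by (rule powr_add[symmetric])
    finally show ?thesis by simp
  qed
  finally show ?thesis by simp
qed

lemma ln2_gt_half: "1/2 < ln (2::real)"
proof -
  have e1: "exp (1/2::real) * exp (1/2) = exp 1" by (simp add: exp_add[symmetric])
  have e2: "exp (1::real) \<le> 3" by (rule exp_le)
  have "exp (1/2::real) < 2"
  proof (rule ccontr)
    assume "\<not> exp (1/2::real) < 2"
    then have "2 \<le> exp (1/2::real)" by simp
    then have "2 * 2 \<le> exp (1/2::real) * exp (1/2)" by (intro mult_mono) auto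
    then show False using e1 e2 by simp
  qed
  then show ?thesis by (metis exp_less_cancel_iff exp_ln zero_less_numeral)
qed

lemma exp3_le: "exp (3::real) \<le> 27"
proof -
  have "exp (3::real) = exp 1 ^ 3" by (simp add: exp_of_nat_mult[symmetric])
  also have "\<dots> \<le> 3 ^ 3" by (intro power_mono exp_le) simp
  finally show ?thesis by simp
qed

lemma tail_bound:
  fixes q Lr :: real
  assumes R: "real R \<le> exp (real K)" and K: "K \<ge> 1" and q: "0 \<le> q"
    and ratio: "real m * q / real K \<le> 1/27"
  shows "real R * (real (m choose K) * q ^ K) \<le> exp (- real K)"
proof -
  have "real (m choose K) * q ^ K \<le> (exp 1 * real m * q / real K) ^ K"
    by (rule binom_bound[OF q K])
  also have "\<dots> \<le> exp (-2) ^ K"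
  proof (rule power_mono)
    have "exp 1 * real m * q / real K = exp 1 * (real m * q / real K)" by simp
    also have "\<dots> \<le> exp 1 * (1/27)" by (rule mult_left_mono[OF ratio]) simp
    also have "\<dots> = exp 1 / 27" by simp
    also have "\<dots> \<le> exp 1 / exp 3" by (rule divide_left_mono) (use exp3_le in auto)
    also have "\<dots> = exp (-2)" by (simp add: exp_diff[symmetric])
    finally show "exp 1 * real m * q / real K \<le> exp (-2)" .
    show "0 \<le> exp 1 * real m * q / real K" using q by simp
  qed
  also have "\<dots> = exp (-2 * real K)" by (simp add: exp_of_nat_mult[symmetric] mult.commute)
  finally have b: "real (m choose K) * q ^ K \<le> exp (-2 * real K)" .
  have "real R * (real (m choose K) * q ^ K) \<le> exp (real K) * exp (-2 * real K)"
    using b R q by (intro mult_mono) auto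
  also have "\<dots> = exp (- real K)" by (simp add: exp_add[symmetric])
  finally show ?thesis .
qed

lemma generic_bound:
  fixes Q :: "(nat \<Rightarrow> real) pmf" and n :: nat and y :: "nat \<Rightarrow> real"
  assumes p: "1 \<le> p" and b: "0 \<le> b" and Lr: "0 \<le> Lr" and mn: "m \<le> n"
    and hcol: "\<And>c. c \<in> set_pmf Q \<Longrightarrow> (\<Sum>r<R. \<bar>c r\<bar> powr p) \<le> b"
    and hq: "\<And>r. r < R \<Longrightarrow> measure_pmf.prob Q {c. c r \<noteq> 0} \<le> q" and q: "0 \<le> q"
    and tail: "real R * (real (m choose (nat \<lfloor>Lr\<rfloor> + 1)) * q ^ (nat \<lfloor>Lr\<rfloor> + 1)) \<le> \<epsilon>"
  shows "measure_pmf.prob (Pi_pmf {..<n} (\<lambda>_. 0) (\<lambda>_. Q))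
     {M. lp_norm p R (mat_apply R n M (restrict_first m y)) \<le> Lr powr (1 - 1/p) * b powr (1/p) * lp_norm p n y}
     \<ge> 1 - \<epsilon>"
proof -
  define K where "K = nat \<lfloor>Lr\<rfloor> + 1"
  define P where "P = Pi_pmf {..<n} (\<lambda>_. 0::real) (\<lambda>_. Q)"
  define bad where "bad = {M::nat\<Rightarrow>nat\<Rightarrow>real. \<exists>r<R. K \<le> card {j\<in>{..<m}. M j r \<noteq> 0}}"
  define good where "good = {M. lp_norm p R (mat_apply R n M (restrict_first m y)) \<le> Lr powr (1 - 1/p) * b powr (1/p) * lp_norm p n y}"
  have pbad: "measure_pmf.prob P bad \<le> \<epsilon>"
    using load_bound[where R=R and K=K and Q=Q and m=m and n=n and q=q, OF mn q hq] tail unfolding P_def bad_def K_def by linarith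
  have ae: "AE M in measure_pmf P. M \<in> - bad \<longrightarrow> M \<in> good"
  proof (rule AE_pmfI, rule impI)
    fix M assume MP: "M \<in> set_pmf P" and Mb: "M \<in> - bad"
    have Mcol: "M j \<in> set_pmf Q" if "j < n" for j
      using MP that unfolding P_def by (auto simp: set_Pi_pmf PiE_dflt_def)
    define x where "x = restrict_first m y"
    have det: "lp_norm p R (mat_apply R n M x) \<le> Lr powr (1 - 1/p) * b powr (1/p) * lp_norm p n x"
    proof (rule det_bound[OF p b Lr])
      show "(\<Sum>r<R. \<bar>M j r\<bar> powr p) \<le> b" if "j < n" for j using hcol Mcol that by blast
      fix r assume r: "r < R"
      have sub: "{j\<in>{..<n}. M j r * x j \<noteq> 0} \<subseteq> {j\<in>{..<m}. M j r \<noteq> 0}"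
        by (auto simp: x_def restrict_first_def split: if_splits)
      have "card {j\<in>{..<n}. M j r * x j \<noteq> 0} \<le> card {j\<in>{..<m}. M j r \<noteq> 0}"
        by (rule card_mono[OF _ sub]) simp
      also have "\<dots> < K" using Mb r by (auto simp: bad_def not_le)
      finally have "card {j\<in>{..<n}. M j r * x j \<noteq> 0} \<le> nat \<lfloor>Lr\<rfloor>" by (simp add: K_def)
      then have "real (card {j\<in>{..<n}. M j r * x j \<noteq> 0}) \<le> real (nat \<lfloor>Lr\<rfloor>)" by linarith
      also have "\<dots> \<le> Lr" using Lr by linarith
      finally show "real (card {j\<in>{..<n}. M j r * x j \<noteq> 0}) \<le> Lr" .
    qed
    have xy: "lp_norm p n x \<le> lp_norm p n y"
      unfolding lp_norm_def using p
      by (intro powr_mono2 sum_mono sum_nonneg) (auto simp: x_def restrict_first_def)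
    have "Lr powr (1 - 1/p) * b powr (1/p) * lp_norm p n x \<le> Lr powr (1 - 1/p) * b powr (1/p) * lp_norm p n y"
      by (intro mult_left_mono xy) auto
    with det show "M \<in> good" by (simp add: good_def x_def)
  qed
  have "measure_pmf.prob P (- bad) \<le> measure_pmf.prob P good"
    by (rule measure_pmf.finite_measure_mono_AE[OF ae]) simp
  moreover have "measure_pmf.prob P (- bad) = 1 - measure_pmf.prob P bad"
    using measure_pmf.prob_compl[of bad P] by (simp add: Compl_eq_Diff_UNIV)
  ultimately show ?thesis using pbad unfolding P_def good_def by linarith
qed

lemma nat_ceil_bounds:
  fixes x :: real assumes "0 \<le> x"
  shows "x \<le> real (nat \<lceil>x\<rceil>)" "real (nat \<lceil>x\<rceil>) \<le> x + 1"
proof -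
  have e: "real (nat \<lceil>x\<rceil>) = of_int \<lceil>x\<rceil>" using assms by simp
  show "x \<le> real (nat \<lceil>x\<rceil>)" unfolding e by (rule le_of_int_ceiling)
  show "real (nat \<lceil>x\<rceil>) \<le> x + 1" unfolding e using ceiling_correct[of x] by linarith
qed

lemma common_facts:
  fixes C0 \<omega> :: real and d :: nat
  assumes C0: "C0 > 0" and d: "2 \<le> d" and om: "3 + 2 * (C0 + 1) \<le> \<omega>"
  shows "1/2 < ln (real d)" "\<omega> \<le> \<omega> * real d * ln (real d)"
    "(C0 + 1) * real d ^ 3 \<le> exp (\<omega> * real d * ln (real d))"
    "0 < \<omega> * real d * ln (real d)"
proof -
  have D: "2 \<le> real d" using d by simp
  have "ln 2 \<le> ln (real d)" using D by simp
  then show l: "1/2 < ln (real d)" using ln2_gt_half by linarith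
  have om0: "0 < \<omega>" using om C0 by (smt (verit))
  have "1 \<le> real d * ln (real d)"
  proof -
    have "2 * (1/2) \<le> real d * ln (real d)" using D l by (intro mult_mono) auto
    then show ?thesis by simp
  qed
  then have "\<omega> * 1 \<le> \<omega> * (real d * ln (real d))" using om0 by (intro mult_left_mono) auto
  then show w: "\<omega> \<le> \<omega> * real d * ln (real d)" by (simp add: mult.assoc)
  then show "0 < \<omega> * real d * ln (real d)" using om0 by linarith
  have "ln ((C0 + 1) * real d ^ 3) = ln (C0 + 1) + 3 * ln (real d)"
    using C0 D by (simp add: ln_mult ln_realpow)
  also have "\<dots> \<le> C0 + 3 * ln (real d)" using C0 ln_le_minus_one[of "C0 + 1"] by simp
  also have "\<dots> \<le> \<omega> * ln (real d)"
  proof -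
    have "(3 + 2 * (C0 + 1)) * ln (real d) \<le> \<omega> * ln (real d)" using om l by (intro mult_right_mono) auto
    moreover have "C0 + 3 * ln (real d) \<le> (3 + 2 * (C0 + 1)) * ln (real d)"
    proof -
      have "C0 \<le> 2 * (C0 + 1) * ln (real d)"
      proof -
        have "2 * (C0 + 1) * (1/2) \<le> 2 * (C0 + 1) * ln (real d)" using l C0 by (intro mult_left_mono) auto
        then show ?thesis by simp
      qed
      then show ?thesis by (simp add: algebra_simps)
    qed
    ultimately show ?thesis by linarith
  qed
  also have "\<dots> \<le> \<omega> * real d * ln (real d)"
  proof -
    have "\<omega> * ln (real d) * 1 \<le> \<omega> * ln (real d) * real d" using om0 l D by (intro mult_left_mono) auto
    then show ?thesis by (simp add: algebra_simps)
  qed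
  finally have "ln ((C0 + 1) * real d ^ 3) \<le> \<omega> * real d * ln (real d)" .
  moreover have "0 < (C0 + 1) * real d ^ 3" using C0 D by simp
  ultimately show "(C0 + 1) * real d ^ 3 \<le> exp (\<omega> * real d * ln (real d))"
    by (metis exp_le_cancel_iff exp_ln)
qed

lemma part1:
  fixes p C0 \<omega> :: real and d n :: nat and y :: "nat \<Rightarrow> real"
  assumes p: "1 \<le> p" and C0: "C0 > 0" and d: "2 \<le> d" and nd: "d^2 \<le> n"
    and om1: "3 + 2 * (C0 + 1) \<le> \<omega>" and om2: "27 / C0 \<le> \<omega>"
  shows "let R = nat \<lceil>C0 * real d ^ 2\<rceil> in
          measure_pmf.prob (countsketch R n)
            {M. lp_norm p R (mat_apply R n M (restrict_first (d^2) y))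
                  \<le> (\<omega> * d * ln d) powr (1 - 1/p) * lp_norm p n y}
          \<ge> 1 - exp (- 1 * \<omega> * d * ln d)"
proof -
  note cf = common_facts[OF C0 d om1]
  define Lr where "Lr = \<omega> * real d * ln (real d)"
  define K where "K = nat \<lfloor>Lr\<rfloor> + 1"
  define R where "R = nat \<lceil>C0 * real d ^ 2\<rceil>"
  have D: "2 \<le> real d" using d by simp
  have Lr0: "0 < Lr" using cf by (simp add: Lr_def)
  have KLr: "Lr \<le> real K" unfolding K_def using Lr0 by linarith
  have K1: "K \<ge> 1" by (simp add: K_def)
  have R1: "C0 * real d ^ 2 \<le> real R" unfolding R_def by linarith
  have R2: "real R \<le> C0 * real d ^ 2 + 1" unfolding R_def using C0 by (intro nat_ceil_bounds) simp
  have Rpos: "0 < real R" using R1 C0 D by (smt (verit) zero_less_power mult_pos_pos)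
  have RK: "real R \<le> exp (real K)"
  proof -
    have "C0 * real d ^ 2 + 1 \<le> (C0 + 1) * real d ^ 3"
    proof -
      have "real d ^ 2 \<le> real d ^ 3" using D by (intro power_increasing) auto
      moreover have "1 \<le> real d ^ 3" using D by simp
      ultimately show ?thesis using C0 by (simp add: algebra_simps) (smt (verit) mult_left_mono)
    qed
    then show ?thesis using R2 cf(3) KLr unfolding Lr_def by (smt (verit) exp_le_cancel_iff)
  qed
  have ratio: "real (d^2) * (1 / real R) / real K \<le> 1/27"
  proof -
    have a: "real (d^2) * (1 / real R) \<le> 1 / C0"
      using R1 C0 Rpos by (simp add: field_simps)
    have b: "27 / C0 \<le> real K" using om2 cf(2) KLr unfolding Lr_def by linarith
    have "real (d^2) * (1 / real R) / real K \<le> (1 / C0) / (27 / C0)"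
      using a b C0 Rpos by (intro frac_le) auto
    also have "\<dots> = 1/27" using C0 by simp
    finally show ?thesis .
  qed
  have tail: "real R * (real (d^2 choose K) * (1 / real R) ^ K) \<le> exp (- 1 * \<omega> * d * ln d)"
  proof -
    have "real R * (real (d^2 choose K) * (1 / real R) ^ K) \<le> exp (- real K)"
      by (rule tail_bound[OF RK K1 _ ratio]) simp
    also have "\<dots> \<le> exp (- 1 * \<omega> * d * ln d)" using KLr by (simp add: Lr_def)
    finally show ?thesis .
  qed
  have "measure_pmf.prob (Pi_pmf {..<n} (\<lambda>_. 0) (\<lambda>_. countsketch_col R))
     {M. lp_norm p R (mat_apply R n M (restrict_first (d^2) y)) \<le> Lr powr (1 - 1/p) * 1 powr (1/p) * lp_norm p n y}
     \<ge> 1 - exp (- 1 * \<omega> * d * ln d)"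
  proof (rule generic_bound[OF p _ _ nd])
    show "0 \<le> Lr" using Lr0 by simp
    show "\<And>c. c \<in> set_pmf (countsketch_col R) \<Longrightarrow> (\<Sum>r<R. \<bar>c r\<bar> powr p) \<le> 1"
      using cs_col_set Rpos by simp
    show "\<And>r. r < R \<Longrightarrow> measure_pmf.prob (countsketch_col R) {c. c r \<noteq> 0} \<le> 1 / real R"
      by (rule cs_col_prob)
    show "real R * (real (d^2 choose (nat \<lfloor>Lr\<rfloor> + 1)) * (1 / real R) ^ (nat \<lfloor>Lr\<rfloor> + 1)) \<le> exp (- 1 * \<omega> * d * ln d)"
      using tail by (simp add: K_def)
  qed simp_all
  then show ?thesis by (simp add: Let_def R_def[symmetric] countsketch_def Lr_def)
qed

lemma part2:
  fixes p C0 C1 \<omega> B :: real and d n :: nat and y :: "nat \<Rightarrow> real"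
  assumes p: "1 \<le> p" and C0: "C0 > 0" and C1: "C1 > 0" and d: "2 \<le> d" and nd: "d^2 \<le> n"
    and om1: "3 + 2 * (C0 + 1) \<le> \<omega>" and om3: "27 * (4 * C1 + 4) / C0 \<le> \<omega>"
    and B: "2 < B" "B \<le> real d"
  shows "let R = nat \<lceil>C0 * B * d * ln d\<rceil>; s = nat \<lceil>C1 * log B d\<rceil> in
             s \<le> R \<longrightarrow>
             measure_pmf.prob (osnap R s n)
               {M. lp_norm p R (mat_apply R n M (restrict_first (d^2) y))
                     \<le> real s powr (1/p - 1/2) * (\<omega> * d * ln d) powr (1 - 1/p) * lp_norm p n y}
             \<ge> 1 - exp (- 1 * \<omega> * d * ln d)"
proof -
  note cf = common_facts[OF C0 d om1]
  define D where "D = real d"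
  define Lr where "Lr = \<omega> * D * ln D"
  define K where "K = nat \<lfloor>Lr\<rfloor> + 1"
  define R where "R = nat \<lceil>C0 * B * D * ln D\<rceil>"
  define s where "s = nat \<lceil>C1 * log B D\<rceil>"
  have D2: "2 \<le> D" using d by (simp add: D_def)
  have lD: "1/2 < ln D" using cf by (simp add: D_def)
  have lB: "1/2 < ln B" using ln2_gt_half B by (smt (verit) ln_less_cancel_iff)
  have lBD: "ln B \<le> ln D" using B D2 by (simp add: D_def)
  have Lr0: "0 < Lr" using cf by (simp add: Lr_def D_def)
  have KLr: "Lr \<le> real K" unfolding K_def using Lr0 by linarith
  have K1: "K \<ge> 1" by (simp add: K_def)
  have om0: "0 < \<omega>" using om1 C0 by (smt (verit))
  have logge: "1 \<le> log B D"
    using lB lBD by (simp add: log_def)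
  have s_pos: "0 < C1 * log B D" using C1 logge by simp
  have s1: "1 \<le> s" unfolding s_def using s_pos by linarith
  have s2: "real s \<le> C1 * log B D + 1" unfolding s_def using s_pos by (intro nat_ceil_bounds) simp
  have s3: "real s \<le> (2 * C1 + 2) * ln D"
  proof -
    have "C1 * log B D = C1 * ln D * (1 / ln B)" by (simp add: log_def)
    also have "\<dots> \<le> C1 * ln D * 2"
    proof (rule mult_left_mono)
      show "1 / ln B \<le> 2" using lB by (simp add: divide_le_eq)
      show "0 \<le> C1 * ln D" using C1 lD by simp
    qed
    finally have "real s \<le> 2 * C1 * ln D + 1" using s2 by simp
    moreover have "1 \<le> 2 * ln D" using lD by simp
    ultimately show ?thesis by (simp add: algebra_simps)
  qed
  define a where "a = C0 * B * D * ln D"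
  have a0: "0 < a" unfolding a_def using C0 B D2 lD by simp
  have R1: "a \<le> real R" unfolding R_def a_def[symmetric] using a0 by (intro nat_ceil_bounds) simp
  have R2: "real R \<le> a + 1" unfolding R_def a_def[symmetric] using a0 by (intro nat_ceil_bounds) simp
  have Rpos: "0 < real R" using R1 a0 by simp
  have RK: "real R \<le> exp (real K)"
  proof -
    have "a \<le> C0 * D * D * D"
    proof -
      have "ln D \<le> D" using ln_le_minus_one[of D] D2 by simp
      then have "B * D * ln D \<le> D * D * D" using B D2 lD by (intro mult_mono) (auto simp: D_def)
      then have "C0 * (B * D * ln D) \<le> C0 * (D * D * D)" using C0 by (intro mult_left_mono) auto
      then show ?thesis by (simp add: a_def mult.assoc)
    qed
    moreover have "1 \<le> D * D * D" using one_le_power[of D 3] D2 by (simp add: power3_eq_cube)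
    ultimately have "a + 1 \<le> (C0 + 1) * D ^ 3" by (simp add: algebra_simps power3_eq_cube)
    then show ?thesis using R2 cf(3) KLr unfolding Lr_def D_def by (smt (verit) exp_le_cancel_iff)
  qed
  have ratio: "real (d^2) * (real s / real R) / real K \<le> 1/27"
  proof -
    have x1: "real s / real R \<le> ((2 * C1 + 2) * ln D) / a"
      using s3 R1 a0 by (intro frac_le) auto
    have "real (d^2) * (real s / real R) \<le> D^2 * (((2 * C1 + 2) * ln D) / a)"
    proof -
      have "real (d^2) = D^2" by (simp add: D_def)
      moreover have "D^2 * (real s / real R) \<le> D^2 * (((2 * C1 + 2) * ln D) / a)"
        using x1 by (rule mult_left_mono) simp
      ultimately show ?thesis by simp
    qed
    also have "\<dots> = D * (2 * C1 + 2) / (C0 * B)"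
      using D2 lD C0 B by (simp add: a_def field_simps power2_eq_square)
    also have "\<dots> \<le> D * (2 * C1 + 2) / (C0 * 2)"
      using D2 C0 C1 B by (intro frac_le) auto
    also have "\<dots> = D * ((C1 + 1) / C0)" using C0 by (simp add: field_simps)
    finally have X: "real (d^2) * (real s / real R) \<le> D * ((C1 + 1) / C0)" .
    have "27 * ((C1 + 1) / C0) \<le> \<omega> / 2"
    proof -
      have "27 * (4 * C1 + 4) / C0 = 4 * (27 * ((C1 + 1) / C0))" by (simp add: field_simps)
      then show ?thesis using om3 om0 by linarith
    qed
    then have "27 * (real (d^2) * (real s / real R)) \<le> D * (\<omega> / 2)"
    proof -
      assume h: "27 * ((C1 + 1) / C0) \<le> \<omega> / 2"
      have "27 * (real (d^2) * (real s / real R)) \<le> 27 * (D * ((C1 + 1) / C0))" using X by simp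
      also have "\<dots> = D * (27 * ((C1 + 1) / C0))" by simp
      also have "\<dots> \<le> D * (\<omega> / 2)" using h D2 by (intro mult_left_mono) auto
      finally show ?thesis .
    qed
    also have "\<dots> \<le> D * (\<omega> * ln D)" using D2 om0 lD by (intro mult_left_mono) auto
    also have "\<dots> = Lr" by (simp add: Lr_def)
    finally have "27 * (real (d^2) * (real s / real R)) \<le> real K" using KLr by linarith
    then have "real (d^2) * (real s / real R) \<le> real K / 27" by (simp add: mult_ac)
    then have "real (d^2) * (real s / real R) / real K \<le> (real K / 27) / real K"
      using K1 by (intro divide_right_mono) auto
    then show ?thesis using K1 by simp
  qed
  have tail: "real R * (real (d^2 choose K) * (real s / real R) ^ K) \<le> exp (- 1 * \<omega> * d * ln d)"
  proof -
    have "real R * (real (d^2 choose K) * (real s / real R) ^ K) \<le> exp (- real K)"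
      by (rule tail_bound[OF RK K1 _ ratio]) simp
    also have "\<dots> \<le> exp (- 1 * \<omega> * d * ln d)" using KLr by (simp add: Lr_def D_def)
    finally show ?thesis .
  qed
  show ?thesis
  proof (unfold Let_def D_def[symmetric] R_def[symmetric] s_def[symmetric], rule impI)
    assume sR: "s \<le> R"
    have "measure_pmf.prob (Pi_pmf {..<n} (\<lambda>_. 0) (\<lambda>_. osnap_col R s))
       {M. lp_norm p R (mat_apply R n M (restrict_first (d^2) y)) \<le> Lr powr (1 - 1/p) * (real s powr (1 - p/2)) powr (1/p) * lp_norm p n y}
       \<ge> 1 - exp (- 1 * \<omega> * d * ln d)"
    proof (rule generic_bound[OF p _ _ nd])
      show "0 \<le> Lr" using Lr0 by simp
      show "\<And>c. c \<in> set_pmf (osnap_col R s) \<Longrightarrow> (\<Sum>r<R. \<bar>c r\<bar> powr p) \<le> real s powr (1 - p/2)"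
        using osnap_col_set s1 sR by blast
      show "\<And>r. r < R \<Longrightarrow> measure_pmf.prob (osnap_col R s) {c. c r \<noteq> 0} \<le> real s / real R"
        using osnap_col_prob s1 sR by blast
      show "real R * (real (d^2 choose (nat \<lfloor>Lr\<rfloor> + 1)) * (real s / real R) ^ (nat \<lfloor>Lr\<rfloor> + 1)) \<le> exp (- 1 * \<omega> * d * ln d)"
        using tail by (simp add: K_def)
    qed simp_all
    moreover have "(real s powr (1 - p/2)) powr (1/p) = real s powr (1/p - 1/2)"
      using p by (simp add: powr_powr field_simps)
    ultimately show "measure_pmf.prob (osnap R s n)
               {M. lp_norm p R (mat_apply R n M (restrict_first (d^2) y))
                     \<le> real s powr (1/p - 1/2) * (\<omega> * D * ln D) powr (1 - 1/p) * lp_norm p n y}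
             \<ge> 1 - exp (- 1 * \<omega> * D * ln D)"
      by (simp add: osnap_def Lr_def D_def mult_ac)
  qed
qed

theorem mainTheorem15:
  fixes p C0 C1 :: real
  assumes "1 \<le> p" and "p < 2" and "C0 > 0" and "C1 > 0"
  shows "\<exists>\<omega>0 c :: real. c > 0 \<and>
    (\<forall>(d::nat) (n::nat) (\<omega>::real) (y::nat \<Rightarrow> real).
       d \<ge> 2 \<longrightarrow> n \<ge> d^2 \<longrightarrow> \<omega> \<ge> \<omega>0 \<longrightarrow>
       (let R = nat \<lceil>C0 * real d ^ 2\<rceil> in
          measure_pmf.prob (countsketch R n)
            {M. lp_norm p R (mat_apply R n M (restrict_first (d^2) y))
                  \<le> (\<omega> * d * ln d) powr (1 - 1/p) * lp_norm p n y}
          \<ge> 1 - exp (- c * \<omega> * d * ln d))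
       \<and>
       (\<forall>B::real. 2 < B \<longrightarrow> B \<le> real d \<longrightarrow>
          (let R = nat \<lceil>C0 * B * d * ln d\<rceil>; s = nat \<lceil>C1 * log B d\<rceil> in
             s \<le> R \<longrightarrow>
             measure_pmf.prob (osnap R s n)
               {M. lp_norm p R (mat_apply R n M (restrict_first (d^2) y))
                     \<le> real s powr (1/p - 1/2) * (\<omega> * d * ln d) powr (1 - 1/p) * lp_norm p n y}
             \<ge> 1 - exp (- c * \<omega> * d * ln d))))"
proof -
  define a where "a = 27 / C0"
  define b where "b = 27 * (4 * C1 + 4) / C0"
  define \<omega>0 where "\<omega>0 = 3 + 2 * (C0 + 1) + a + b"
  have t1: "0 \<le> a" using assms by (simp add: a_def)
  have t2: "0 \<le> b" using assms by (simp add: b_def)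
  have t3: "0 \<le> 2 * (C0 + 1)" using assms by simp
  have o1: "3 + 2 * (C0 + 1) \<le> \<omega>" if "\<omega>0 \<le> \<omega>" for \<omega> using that t1 t2 unfolding \<omega>0_def by linarith
  have o2: "27 / C0 \<le> \<omega>" if "\<omega>0 \<le> \<omega>" for \<omega> using that t1 t2 t3 unfolding \<omega>0_def a_def[symmetric] by linarith
  have o3: "27 * (4 * C1 + 4) / C0 \<le> \<omega>" if "\<omega>0 \<le> \<omega>" for \<omega> using that t1 t2 t3 unfolding \<omega>0_def b_def[symmetric] by linarith
  show ?thesis
    apply (rule exI[of _ \<omega>0], rule exI[of _ 1])
    apply (intro conjI allI impI)
    subgoal by simp
    subgoal for d n \<omega> y
      by (rule part1[OF assms(1) assms(3)]) (assumption | rule o1 o2, assumption)+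
    subgoal for d n \<omega> y B
      by (rule part2[OF assms(1) assms(3) assms(4)]) (assumption | rule o1 o3, assumption)+
    done
qed

end
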